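(* Let $A_{i,j}(z)=|z|^\gamma(|z|^2\delta_{i,j}-z_iz_j)$ on $\mathbb{R}^d$ with $-d-1\le\gamma\le 1$, and let $s_t:\mathbb{R}^d\to\mathbb{R}^d$ be any sufficiently regular time-dependent vector field. Consider the continuity equation $$\frac{\partial u_t}{\partial t}+\nabla\cdot(v_tu_t)=0,\qquad v_t(x)=-\int_{\mathbb{R}^d}A(x-y)\big[s_t(x)-s_t(y)\big]\,\mathrm{d}u_t(y),$$ with initial density $u_0$. 1. The density solution $u_t$ conserves mass, momentum and energy: $\int u_t=\int u_0$, $\int xu_t=\int xu_0$, $\int|x|^2u_t=\int|x|^2u_0$; moreover the estimated entropy $\mathcal{E}_t:=\int_0^t\int_{\mathbb{R}^d}s_\tau(x)\cdot v_\tau(x)u_\tau(x)\,\mathrm{d}x\,\mathrm{d}\tau$ satisfies $\frac{\mathrm{d}}{\mathrm{d}t}\mathcal{E}_t\le 0$. 2. The particle solution $\frac1n\sum_{i=1}^n\delta_{X_i(t)}$ with $\frac{\mathrm{d}X_i}{\mathrm{d}t}=v_t(X_i)$, where $v_t(X_i)=-\frac1n\sum_{j=1}^nA(X_i-X_j)[s_t(X_i)-s_t(X_j)]$, conserves mass, momentum and energy: $\frac1n\sum_iX_i(t)=\frac1n\sum_iX_i(0)$ and $\frac1n\sum_i|X_i(t)|^2=\frac1n\sum_i|X_i(0)|^2$; moreover $\mathcal{E}_t:=\frac1n\int_0^t\sum_{i=1}^n s_\tau(X_i)\cdot v_\tau(X_i)\,\mathrm{d}\tau$ satisfies $\frac{\mathrm{d}}{\mathrm{d}t}\mathcal{E}_t\le0$.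 3. The forward-Euler time-discretized particle solution $X_i^{k+1}=X_i^k+\Delta t\, v(X_i^k)$, where $v(X_i^k)=-\frac1n\sum_{j=1}^nA(X_i^k-X_j^k)[s(X_i^k)-s(X_j^k)]$ and $\{X_i^k\}_{i=1}^n$ are the particle locations at time $t_k=k\Delta t$, conserves mass and momentum, $\frac1n\sum_iX_i^{k+1}=\frac1n\sum_iX_i^k$, and the estimated entropy $\mathcal{E}^k:=\frac{\Delta t}{n}\sum_{j=1}^k\sum_{i=1}^n s(X_i^j)\cdot v(X_i^j)$ satisfies $\mathcal{E}^{k+1}\le\mathcal{E}^k$.
   Context: Solutions of the continuity equation are understood in the weak sense: $u_t$ is a curve of probability measures with $\frac{\mathrm{d}}{\mathrm{d}t}\int\phi\,\mathrm{d}u_t=\int\nabla\phi\cdot v_t\,\mathrm{d}u_t$ for all test functions $\phi$. *)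

theory Defs
  imports "HOL-Analysis.Analysis" "HOL-Probability.Probability"
begin

text \<open>The matrix-valued kernel A(z) = |z|^gamma (|z|^2 I - z z^T) on R^d (d = CARD('n)).
  At z = 0 the factor 0 powr gamma is 0 by Isabelle's convention, so A(0) = 0.\<close>
definition kerA :: "real \<Rightarrow> real^'n \<Rightarrow> real^'n^'n" where
  "kerA \<gamma> z = (\<chi> i j. norm z powr \<gamma> * ((norm z)^2 * (if i = j then 1 else 0) - z$i * z$j))"

definition vel :: "real \<Rightarrow> (real^'n \<Rightarrow> real^'n) \<Rightarrow> (real^'n) measure \<Rightarrow> real^'n \<Rightarrow> real^'n" where
  "vel \<gamma> s \<mu> x = - (\<integral>y. kerA \<gamma> (x - y) *v (s x - s y) \<partial>\<mu>)"

definition vel_particles :: "real \<Rightarrow> (real^'n \<Rightarrow> real^'n) \<Rightarrow> nat \<Rightarrow> (nat \<Rightarrow> real^'n) \<Rightarrow> nat \<Rightarrow> real^'n" where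
  "vel_particles \<gamma> s n X i = - ((1 / real n) *\<^sub>R (\<Sum>j<n. kerA \<gamma> (X i - X j) *v (s (X i) - s (X j))))"

definition test_fn :: "(real^'n \<Rightarrow> real) \<Rightarrow> (real^'n \<Rightarrow> real^'n) \<Rightarrow> bool" where
  "test_fn \<phi> g \<longleftrightarrow> (\<forall>x. (\<phi> has_derivative (\<lambda>h. g x \<bullet> h)) (at x)) \<and> continuous_on UNIV g \<and>
     (\<exists>C. \<forall>x. \<bar>\<phi> x\<bar> \<le> C * (1 + (norm x)^2) \<and> norm (g x) \<le> C * (1 + norm x))"

definition weak_continuity_solution ::
    "(real \<Rightarrow> (real^'n) measure) \<Rightarrow> (real \<Rightarrow> real^'n \<Rightarrow> real^'n) \<Rightarrow> bool" where
  "weak_continuity_solution u v \<longleftrightarrow>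
     (\<forall>t\<ge>0. prob_space (u t) \<and> sets (u t) = sets borel) \<and>
     (\<forall>\<phi> g. test_fn \<phi> g \<longrightarrow> (\<forall>t\<ge>0.
        ((\<lambda>\<tau>. \<integral>x. \<phi> x \<partial>u \<tau>) has_real_derivative (\<integral>x. g x \<bullet> v t x \<partial>u t)) (at t within {0..})))"

end

theory Submission
  imports Defs
begin

lemma kerA_mult: "kerA \<gamma> z *v w = (norm z powr \<gamma>) *\<^sub>R ((norm z)^2 *\<^sub>R w - (z \<bullet> w) *\<^sub>R z)"
proof -
  have "(kerA \<gamma> z *v w) $ i = ((norm z powr \<gamma>) *\<^sub>R ((norm z)^2 *\<^sub>R w - (z \<bullet> w) *\<^sub>R z)) $ i" for i
  proof -
    have "(kerA \<gamma> z *v w) $ i = (\<Sum>j\<in>UNIV. (if i = j then norm z powr \<gamma> * ((norm z)^2 * w $ j) else 0) - norm z powr \<gamma> * (z$i * (z$j * w$j)))"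
      unfolding matrix_vector_mult_def vec_lambda_beta by (intro sum.cong refl) (simp add: kerA_def right_diff_distrib distrib_left; simp add: algebra_simps)
    also have "\<dots> = norm z powr \<gamma> * ((norm z)^2 * w $ i) - norm z powr \<gamma> * (z$i * (z \<bullet> w))"
      by (simp add: sum_subtractf sum_distrib_left[symmetric] inner_vec_def)
    finally show ?thesis by (simp add: algebra_simps)
  qed
  then show ?thesis by (simp add: vec_eq_iff)
qed

lemma kerA_neg: "kerA \<gamma> (- z) = kerA \<gamma> z"
  by (simp add: kerA_def)

lemma kerA_sym: "a \<bullet> (kerA \<gamma> z *v b) = b \<bullet> (kerA \<gamma> z *v a)"
  by (simp add: kerA_mult inner_diff_right inner_commute)

lemma kerA_orth: "z \<bullet> (kerA \<gamma> z *v b) = 0"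
  by (simp add: kerA_mult inner_diff_right inner_commute power2_norm_eq_inner)

lemma kerA_psd: "b \<bullet> (kerA \<gamma> z *v b) \<ge> 0"
proof -
  have cs: "\<bar>z \<bullet> b\<bar> \<le> norm z * norm b" by (rule Cauchy_Schwarz_ineq2)
  have "(z \<bullet> b)^2 \<le> (norm z * norm b)^2"
    using cs by (metis abs_ge_zero power2_abs power_mono)
  hence "0 \<le> (norm z)^2 * (b \<bullet> b) - (z \<bullet> b) * (b \<bullet> z)"
    by (simp add: power_mult_distrib power2_norm_eq_inner[symmetric] inner_commute power2_eq_square mult_ac)
  thus ?thesis
    by (simp add: kerA_mult inner_diff_right)
qed

lemma kerA_swap: "kerA \<gamma> (y - x) *v (a - b) = - (kerA \<gamma> (x - y) *v (b - a))"
proof -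
  have "kerA \<gamma> (y - x) = kerA \<gamma> (x - y)" using kerA_neg[of \<gamma> "x - y"] by simp
  thus ?thesis by (simp add: matrix_vector_mult_diff_distrib)
qed

lemma vp_inner:
  fixes Y :: "nat \<Rightarrow> real^'n"
  shows "(\<Sum>i<n. w i \<bullet> vel_particles \<gamma> s n Y i) = - (1/(2*real n)) *
     (\<Sum>i<n. \<Sum>j<n. (w i - w j) \<bullet> (kerA \<gamma> (Y i - Y j) *v (s (Y i) - s (Y j))))"
proof -
  define G where "G i j = w i \<bullet> (kerA \<gamma> (Y i - Y j) *v (s (Y i) - s (Y j)))" for i j
  have L: "(\<Sum>i<n. w i \<bullet> vel_particles \<gamma> s n Y i) = - (1/real n) * (\<Sum>i<n. \<Sum>j<n. G i j)"
    by (simp add: vel_particles_def G_def inner_sum_right sum_distrib_left sum_negf sum_divide_distrib)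
  have sw: "(\<Sum>i<n. \<Sum>j<n. G i j) = (\<Sum>i<n. \<Sum>j<n. G j i)" by (rule sum.swap)
  have GG: "G i j + G j i = (w i - w j) \<bullet> (kerA \<gamma> (Y i - Y j) *v (s (Y i) - s (Y j)))" for i j
    unfolding G_def by (simp add: kerA_swap[of \<gamma> "Y j" "Y i" "s (Y j)" "s (Y i)"] inner_diff_left)
  have "2 * (\<Sum>i<n. \<Sum>j<n. G i j) = (\<Sum>i<n. \<Sum>j<n. (w i - w j) \<bullet> (kerA \<gamma> (Y i - Y j) *v (s (Y i) - s (Y j))))"
    by (subst mult_2, subst (2) sw) (simp add: sum.distrib[symmetric] GG)
  hence S: "(\<Sum>i<n. \<Sum>j<n. G i j) = (\<Sum>i<n. \<Sum>j<n. (w i - w j) \<bullet> (kerA \<gamma> (Y i - Y j) *v (s (Y i) - s (Y j)))) / 2"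
    by linarith
  show ?thesis unfolding L S by simp
qed

lemma vp_sum: "(\<Sum>i<n. vel_particles \<gamma> s n Y i) = 0"
proof -
  have "c \<bullet> (\<Sum>i<n. vel_particles \<gamma> s n Y i) = 0" for c
    using vp_inner[where w="\<lambda>_. c" and n=n and \<gamma>=\<gamma> and s=s and Y=Y] by (simp add: inner_sum_right)
  thus ?thesis by (metis inner_eq_zero_iff)
qed

lemma vp_energy: "(\<Sum>i<n. Y i \<bullet> vel_particles \<gamma> s n Y i) = 0"
  using vp_inner[where w=Y and n=n and \<gamma>=\<gamma> and s=s and Y=Y] by (simp add: kerA_orth)

lemma vp_entropy: "(\<Sum>i<n. s (Y i) \<bullet> vel_particles \<gamma> s n Y i) \<le> 0"
proof -
  have "0 \<le> (\<Sum>i<n. \<Sum>j<n. (s (Y i) - s (Y j)) \<bullet> (kerA \<gamma> (Y i - Y j) *v (s (Y i) - s (Y j))))"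
    by (intro sum_nonneg kerA_psd)
  thus ?thesis using vp_inner[where w="\<lambda>i. s (Y i)" and n=n and \<gamma>=\<gamma> and s=s and Y=Y]
    by (simp add: mult_nonneg_nonneg)
qed

lemma ftc0:
  assumes "continuous_on {0..} f" "(t::real) \<ge> 0"
  shows "((\<lambda>x. integral {0..x} f) has_real_derivative f t) (at t within {0..})"
proof -
  have "((\<lambda>x. integral {0..x} f) has_real_derivative f t) (at t within {0..t+1})"
    by (rule integral_has_real_derivative) (use assms in \<open>auto intro: continuous_on_subset\<close>)
  moreover have "at t within {0..t+1} = at t within {0..}"
    by (rule at_within_nhd[where S="{..<t+1}"]) auto
  ultimately show ?thesis by simp
qed

lemma sym_integral:
  fixes M :: "(real^'n) measure" and s w :: "real^'n \<Rightarrow> real^'n"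
  assumes P: "prob_space M" and sets: "sets M = sets borel"
    and intF: "integrable (M \<Otimes>\<^sub>M M) (\<lambda>(x,y). kerA \<gamma> (x - y) *v (s x - s y))"
    and intG: "integrable (M \<Otimes>\<^sub>M M) (\<lambda>(x,y). w x \<bullet> (kerA \<gamma> (x - y) *v (s x - s y)))"
    and wM: "w \<in> borel_measurable M"
  shows "(\<integral>x. w x \<bullet> vel \<gamma> s M x \<partial>M) = -(1/2) * (\<integral>(x,y). (w x - w y) \<bullet> (kerA \<gamma> (x - y) *v (s x - s y)) \<partial>(M \<Otimes>\<^sub>M M))"
proof -
  interpret M: prob_space M by (rule P)
  interpret PP: pair_sigma_finite M M
    unfolding pair_sigma_finite_def using M.sigma_finite_measure_axioms by simp
  define F where "F x y = kerA \<gamma> (x - y) *v (s x - s y)" for x y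
  have intF': "integrable (M \<Otimes>\<^sub>M M) (case_prod F)" using intF by (simp add: F_def[abs_def])
  have intG': "integrable (M \<Otimes>\<^sub>M M) (\<lambda>(x,y). w x \<bullet> F x y)" using intG by (simp add: F_def)
  have Fm[measurable]: "case_prod F \<in> borel_measurable (M \<Otimes>\<^sub>M M)"
    using intF' by (rule borel_measurable_integrable)
  have Gm[measurable]: "(\<lambda>(x,y). w x \<bullet> F x y) \<in> borel_measurable (M \<Otimes>\<^sub>M M)"
    using intG' by (rule borel_measurable_integrable)
  have AE: "AE x in M. integrable M (\<lambda>y. F x y)"
    using PP.AE_integrable_fst[OF intF'] .
  have vm: "(\<lambda>x. \<integral>y. F x y \<partial>M) \<in> borel_measurable M"
    by (rule M.borel_measurable_lebesgue_integral) (rule Fm)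
  have inm: "(\<lambda>x. \<integral>y. w x \<bullet> F x y \<partial>M) \<in> borel_measurable M"
    by (rule M.borel_measurable_lebesgue_integral) (use Gm in simp)
  have 1: "(\<integral>x. w x \<bullet> vel \<gamma> s M x \<partial>M) = (\<integral>x. - (\<integral>y. w x \<bullet> F x y \<partial>M) \<partial>M)"
  proof (rule integral_cong_AE)
    show "(\<lambda>x. w x \<bullet> vel \<gamma> s M x) \<in> borel_measurable M"
    proof -
      have "(\<lambda>x. w x \<bullet> (- (\<integral>y. F x y \<partial>M))) \<in> borel_measurable M"
        by (rule borel_measurable_inner[OF wM borel_measurable_uminus[OF vm]])
      thus ?thesis by (simp add: vel_def F_def)
    qed
    show "(\<lambda>x. - (\<integral>y. w x \<bullet> F x y \<partial>M)) \<in> borel_measurable M"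
      by (rule borel_measurable_uminus[OF inm])
    show "AE x in M. w x \<bullet> vel \<gamma> s M x = - (\<integral>y. w x \<bullet> F x y \<partial>M)"
      using AE by eventually_elim (simp add: vel_def F_def)
  qed
  have 2: "(\<integral>x. (\<integral>y. w x \<bullet> F x y \<partial>M) \<partial>M) = (\<integral>(x,y). w x \<bullet> F x y \<partial>(M \<Otimes>\<^sub>M M))"
    using PP.integral_fst[of "\<lambda>x y. w x \<bullet> F x y"] intG' by simp
  have swp: "(\<integral>(x,y). w y \<bullet> F y x \<partial>(M \<Otimes>\<^sub>M M)) = (\<integral>(x,y). w x \<bullet> F x y \<partial>(M \<Otimes>\<^sub>M M))"
    using PP.integral_product_swap[OF Gm] by simp
  have Fsw: "F y x = - F x y" for x y
    unfolding F_def by (rule kerA_swap)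
  have Hx: "w y \<bullet> F y x = - (w y \<bullet> F x y)" for x y
    by (subst Fsw) simp
  have intH0: "integrable (M \<Otimes>\<^sub>M M) (\<lambda>(x,y). w y \<bullet> F y x)"
    using PP.integrable_product_swap[OF intG'] by simp
  have intH: "integrable (M \<Otimes>\<^sub>M M) (\<lambda>(x,y). w y \<bullet> F x y)"
  proof -
    have "integrable (M \<Otimes>\<^sub>M M) (\<lambda>p. - (case p of (x,y) \<Rightarrow> w y \<bullet> F y x))"
      using intH0 by (rule integrable_minus)
    moreover have "(\<lambda>p. - (case p of (x,y) \<Rightarrow> w y \<bullet> F y x)) = (\<lambda>(x,y). w y \<bullet> F x y)"
      by (auto simp: Hx fun_eq_iff)
    ultimately show ?thesis by simp
  qed
  have 3: "(\<integral>(x,y). w y \<bullet> F y x \<partial>(M \<Otimes>\<^sub>M M)) = - (\<integral>(x,y). w y \<bullet> F x y \<partial>(M \<Otimes>\<^sub>M M))"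
  proof -
    have "(\<lambda>(x,y). w y \<bullet> F y x) = (\<lambda>p. - (case p of (x,y) \<Rightarrow> w y \<bullet> F x y))"
      by (auto simp: Hx fun_eq_iff)
    thus ?thesis by simp
  qed
  have 4: "(\<integral>(x,y). (w x - w y) \<bullet> F x y \<partial>(M \<Otimes>\<^sub>M M)) = (\<integral>(x,y). w x \<bullet> F x y \<partial>(M \<Otimes>\<^sub>M M)) - (\<integral>(x,y). w y \<bullet> F x y \<partial>(M \<Otimes>\<^sub>M M))"
  proof -
    have "(\<lambda>(x,y). (w x - w y) \<bullet> F x y) = (\<lambda>p. (case p of (x,y) \<Rightarrow> w x \<bullet> F x y) - (case p of (x,y) \<Rightarrow> w y \<bullet> F x y))"
      by (auto simp: fun_eq_iff inner_diff_left)
    hence "(\<integral>(x,y). (w x - w y) \<bullet> F x y \<partial>(M \<Otimes>\<^sub>M M)) = (\<integral>p. (case p of (x,y) \<Rightarrow> w x \<bullet> F x y) - (case p of (x,y) \<Rightarrow> w y \<bullet> F x y) \<partial>(M \<Otimes>\<^sub>M M))"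
      by simp
    also have "\<dots> = (\<integral>(x,y). w x \<bullet> F x y \<partial>(M \<Otimes>\<^sub>M M)) - (\<integral>(x,y). w y \<bullet> F x y \<partial>(M \<Otimes>\<^sub>M M))"
      by (rule Bochner_Integration.integral_diff[OF intG' intH])
    finally show ?thesis .
  qed
  show ?thesis
    unfolding F_def[symmetric] 1 integral_minus 2 4 using swp 3 by simp
qed

lemma part1_at:
  fixes M :: "(real^'n) measure" and s w :: "real^'n \<Rightarrow> real^'n"
  assumes P: "prob_space M" and sets: "sets M = sets borel" and s: "s \<in> borel_measurable borel"
    and IB: "integrable (M \<Otimes>\<^sub>M M) (\<lambda>(x,y). norm (kerA \<gamma> (x - y) *v (s x - s y)) * (1 + norm x + norm (s x)))"
    and w: "w \<in> borel_measurable borel" and C: "C \<ge> 0"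
    and wb: "\<And>x. norm (w x) \<le> C * (1 + norm x + norm (s x))"
  shows "(\<integral>x. w x \<bullet> vel \<gamma> s M x \<partial>M) = -(1/2) * (\<integral>(x,y). (w x - w y) \<bullet> (kerA \<gamma> (x - y) *v (s x - s y)) \<partial>(M \<Otimes>\<^sub>M M))"
proof -
  have sM: "s \<in> borel_measurable M" by (subst measurable_cong_sets[OF sets refl]) (rule s)
  have wM: "w \<in> borel_measurable M" by (subst measurable_cong_sets[OF sets refl]) (rule w)
  note [measurable] = s w
  have SS: "sets (M \<Otimes>\<^sub>M M) = sets (borel \<Otimes>\<^sub>M borel)" by (rule sets_pair_measure_cong[OF sets sets])
  have Fm0: "(\<lambda>(x,y). norm (x - y) powr \<gamma> *\<^sub>R ((norm (x - y))^2 *\<^sub>R (s x - s y) - ((x - y) \<bullet> (s x - s y)) *\<^sub>R (x - y))) \<in> borel_measurable (borel \<Otimes>\<^sub>M borel)"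
    by measurable
  have Fm[measurable]: "(\<lambda>(x,y). kerA \<gamma> (x - y) *v (s x - s y)) \<in> borel_measurable (M \<Otimes>\<^sub>M M)"
    using Fm0 by (simp add: kerA_mult measurable_cong_sets[OF SS refl])
  have intF: "integrable (M \<Otimes>\<^sub>M M) (\<lambda>(x,y). kerA \<gamma> (x - y) *v (s x - s y))"
  proof (rule Bochner_Integration.integrable_bound[OF IB Fm], rule AE_I2)
    fix p :: "(real^'n) \<times> (real^'n)"
    obtain x y where p: "p = (x,y)" by (cases p)
    have "norm (kerA \<gamma> (x - y) *v (s x - s y)) \<le> norm (kerA \<gamma> (x - y) *v (s x - s y)) * (1 + norm x + norm (s x))"
      by (simp add: mult_le_cancel_left1 add_nonneg_nonneg)
    thus "norm (case p of (x,y) \<Rightarrow> kerA \<gamma> (x - y) *v (s x - s y)) \<le> norm (case p of (x,y) \<Rightarrow> norm (kerA \<gamma> (x - y) *v (s x - s y)) * (1 + norm x + norm (s x)))"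
      by (simp add: p)
  qed
  have Gm0: "(\<lambda>(x,y). w x \<bullet> (norm (x - y) powr \<gamma> *\<^sub>R ((norm (x - y))^2 *\<^sub>R (s x - s y) - ((x - y) \<bullet> (s x - s y)) *\<^sub>R (x - y)))) \<in> borel_measurable (borel \<Otimes>\<^sub>M borel)"
    by measurable
  have Gm: "(\<lambda>(x,y). w x \<bullet> (kerA \<gamma> (x - y) *v (s x - s y))) \<in> borel_measurable (M \<Otimes>\<^sub>M M)"
    using Gm0 by (simp add: kerA_mult measurable_cong_sets[OF SS refl])
  have intG: "integrable (M \<Otimes>\<^sub>M M) (\<lambda>(x,y). w x \<bullet> (kerA \<gamma> (x - y) *v (s x - s y)))"
  proof (rule Bochner_Integration.integrable_bound[OF integrable_mult_right[OF IB, of C] Gm], rule AE_I2)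
    fix p :: "(real^'n) \<times> (real^'n)"
    obtain x y where p: "p = (x,y)" by (cases p)
    have "\<bar>w x \<bullet> (kerA \<gamma> (x - y) *v (s x - s y))\<bar> \<le> norm (w x) * norm (kerA \<gamma> (x - y) *v (s x - s y))"
      by (rule Cauchy_Schwarz_ineq2)
    also have "\<dots> \<le> C * (1 + norm x + norm (s x)) * norm (kerA \<gamma> (x - y) *v (s x - s y))"
      by (rule mult_right_mono[OF wb]) simp
    finally show "norm (case p of (x,y) \<Rightarrow> w x \<bullet> (kerA \<gamma> (x - y) *v (s x - s y))) \<le> norm (C * (case p of (x,y) \<Rightarrow> norm (kerA \<gamma> (x - y) *v (s x - s y)) * (1 + norm x + norm (s x))))"
      using C by (simp add: p abs_mult mult_ac)
  qed
  show ?thesis by (rule sym_integral[OF P sets intF intG wM])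
qed

lemma sq_deriv_vec:
  assumes "(f has_vector_derivative v) (at t within S)"
  shows "((\<lambda>\<tau>. (norm (f \<tau>))^2) has_real_derivative (2 * (f t \<bullet> v))) (at t within S)"
proof -
  have d: "(f has_derivative (\<lambda>h. h *\<^sub>R v)) (at t within S)"
    using assms by (simp add: has_vector_derivative_def)
  have "((\<lambda>\<tau>. f \<tau> \<bullet> f \<tau>) has_derivative (\<lambda>h. f t \<bullet> (h *\<^sub>R v) + (h *\<^sub>R v) \<bullet> f t)) (at t within S)"
    by (rule has_derivative_inner[OF d d])
  moreover have "(\<lambda>h. f t \<bullet> (h *\<^sub>R v) + (h *\<^sub>R v) \<bullet> f t) = (*) (2 * (f t \<bullet> v))"
    by (auto simp: fun_eq_iff inner_commute algebra_simps)
  ultimately show ?thesis by (simp add: has_field_derivative_def power2_norm_eq_inner)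
qed

lemma le_one_plus_sq: "(a::real) \<le> 1 + a^2"
proof -
  have "0 \<le> (a - 1/2)^2" by simp
  thus ?thesis by (simp add: power2_eq_square algebra_simps)
qed

lemma test_comp: "test_fn (\<lambda>x::real^'n. x $ k) (\<lambda>_. axis k 1)"
  unfolding test_fn_def
proof (intro conjI allI exI[of _ 1])
  fix x :: "real^'n"
  have "(\<lambda>x::real^'n. x $ k) = (\<lambda>h. h \<bullet> axis k 1)" by (simp add: cart_eq_inner_axis)
  moreover have "(\<lambda>h::real^'n. axis k 1 \<bullet> h) = (\<lambda>h. h \<bullet> axis k 1)" by (simp add: inner_commute)
  ultimately show "((\<lambda>x::real^'n. x $ k) has_derivative (\<lambda>h. axis k 1 \<bullet> h)) (at x)"
    using bounded_linear_imp_has_derivative[OF bounded_linear_inner_left[of "axis k (1::real)"]] by simp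
  show "continuous_on UNIV (\<lambda>_::real^'n. axis k (1::real))" by (rule continuous_on_const)
  have "\<bar>x $ k\<bar> \<le> norm x" by (rule component_le_norm_cart)
  also have "\<dots> \<le> 1 + (norm x)^2" by (rule le_one_plus_sq)
  finally show "\<bar>x $ k\<bar> \<le> 1 * (1 + (norm x)^2)" by simp
  show "norm (axis k (1::real)) \<le> 1 * (1 + norm x)" by simp
qed

lemma test_sq: "test_fn (\<lambda>x::real^'n. (norm x)^2) (\<lambda>x. 2 *\<^sub>R x)"
  unfolding test_fn_def
proof (intro conjI allI exI[of _ 2])
  fix x :: "real^'n"
  have "((\<lambda>x::real^'n. x \<bullet> x) has_derivative (\<lambda>h. x \<bullet> h + h \<bullet> x)) (at x)"
    by (rule has_derivative_inner[OF has_derivative_ident has_derivative_ident])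
  moreover have "(\<lambda>h. x \<bullet> h + h \<bullet> x) = (\<lambda>h. (2 *\<^sub>R x) \<bullet> h)"
    by (auto simp: fun_eq_iff inner_commute)
  ultimately show "((\<lambda>x::real^'n. (norm x)^2) has_derivative (\<lambda>h. (2 *\<^sub>R x) \<bullet> h)) (at x)"
    by (simp add: power2_norm_eq_inner)
  show "continuous_on UNIV (\<lambda>x::real^'n. 2 *\<^sub>R x)" by (intro continuous_intros)
  show "\<bar>(norm x)^2\<bar> \<le> 2 * (1 + (norm x)^2)" by simp
  show "norm (2 *\<^sub>R x) \<le> 2 * (1 + norm x)" by simp
qed

lemma const_on_nonneg:
  fixes f :: "real \<Rightarrow> real"
  assumes "\<And>t. t \<ge> 0 \<Longrightarrow> (f has_real_derivative 0) (at t within {0..})" "t \<ge> 0"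
  shows "f t = f 0"
proof -
  obtain c where "\<forall>x\<in>{0..}. f x = c"
    using has_field_derivative_zero_constant[of "{0::real..}" f] assms(1) by auto
  thus ?thesis using assms(2) by auto
qed

theorem proposition3p1:
  fixes \<gamma> :: real
  assumes "- real CARD('n::finite) - 1 \<le> \<gamma>" and "\<gamma> \<le> 1"
  shows
   "(\<forall>(s :: real \<Rightarrow> real^'n \<Rightarrow> real^'n) (u :: real \<Rightarrow> (real^'n) measure).
      weak_continuity_solution u (\<lambda>t. vel \<gamma> (s t) (u t))
      \<and> (\<forall>t\<ge>0. s t \<in> borel_measurable borel)
      \<and> (\<forall>t\<ge>0. integrable (u t) (\<lambda>x. (norm x)^2))
      \<and> (\<forall>t\<ge>0. integrable (u t \<Otimes>\<^sub>M u t)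
            (\<lambda>(x, y). norm (kerA \<gamma> (x - y) *v (s t x - s t y)) * (1 + norm x + norm (s t x))))
      \<and> continuous_on {0..} (\<lambda>\<tau>. \<integral>x. s \<tau> x \<bullet> vel \<gamma> (s \<tau>) (u \<tau>) x \<partial>u \<tau>)
      \<longrightarrow> (\<forall>t\<ge>0. measure (u t) (space (u t)) = measure (u 0) (space (u 0))
             \<and> (\<integral>x. x \<partial>u t) = (\<integral>x. x \<partial>u 0)
             \<and> (\<integral>x. (norm x)^2 \<partial>u t) = (\<integral>x. (norm x)^2 \<partial>u 0)
             \<and> (\<exists>D. ((\<lambda>t. integral {0..t} (\<lambda>\<tau>. \<integral>x. s \<tau> x \<bullet> vel \<gamma> (s \<tau>) (u \<tau>) x \<partial>u \<tau>))
                      has_real_derivative D) (at t within {0..}) \<and> D \<le> 0)))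
    \<and> (\<forall>(s :: real \<Rightarrow> real^'n \<Rightarrow> real^'n) (X :: real \<Rightarrow> nat \<Rightarrow> real^'n) (n :: nat).
      n \<ge> 1
      \<and> (\<forall>i<n. \<forall>t\<ge>0. ((\<lambda>\<tau>. X \<tau> i) has_vector_derivative vel_particles \<gamma> (s t) n (X t) i) (at t within {0..}))
      \<and> continuous_on {0..} (\<lambda>\<tau>. \<Sum>i<n. s \<tau> (X \<tau> i) \<bullet> vel_particles \<gamma> (s \<tau>) n (X \<tau>) i)
      \<longrightarrow> (\<forall>t\<ge>0. (1 / real n) *\<^sub>R (\<Sum>i<n. X t i) = (1 / real n) *\<^sub>R (\<Sum>i<n. X 0 i)
             \<and> (1 / real n) * (\<Sum>i<n. (norm (X t i))^2) = (1 / real n) * (\<Sum>i<n. (norm (X 0 i))^2)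
             \<and> (\<exists>D. ((\<lambda>t. (1 / real n) * integral {0..t}
                        (\<lambda>\<tau>. \<Sum>i<n. s \<tau> (X \<tau> i) \<bullet> vel_particles \<gamma> (s \<tau>) n (X \<tau>) i))
                      has_real_derivative D) (at t within {0..}) \<and> D \<le> 0)))
    \<and> (\<forall>(s :: real^'n \<Rightarrow> real^'n) (X :: nat \<Rightarrow> nat \<Rightarrow> real^'n) (n :: nat) (dt :: real).
      n \<ge> 1 \<and> dt > 0
      \<and> (\<forall>k. \<forall>i<n. X (Suc k) i = X k i + dt *\<^sub>R vel_particles \<gamma> s n (X k) i)
      \<longrightarrow> (\<forall>k. (1 / real n) *\<^sub>R (\<Sum>i<n. X (Suc k) i) = (1 / real n) *\<^sub>R (\<Sum>i<n. X k i)
             \<and> (dt / real n) * (\<Sum>j\<in>{1..Suc k}. \<Sum>i<n. s (X j i) \<bullet> vel_particles \<gamma> s n (X j) i)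
               \<le> (dt / real n) * (\<Sum>j\<in>{1..k}. \<Sum>i<n. s (X j i) \<bullet> vel_particles \<gamma> s n (X j) i)))"
proof (intro conjI)
  show "\<forall>(s :: real \<Rightarrow> real^'n \<Rightarrow> real^'n) (u :: real \<Rightarrow> (real^'n) measure).
      weak_continuity_solution u (\<lambda>t. vel \<gamma> (s t) (u t))
      \<and> (\<forall>t\<ge>0. s t \<in> borel_measurable borel)
      \<and> (\<forall>t\<ge>0. integrable (u t) (\<lambda>x. (norm x)^2))
      \<and> (\<forall>t\<ge>0. integrable (u t \<Otimes>\<^sub>M u t)
            (\<lambda>(x, y). norm (kerA \<gamma> (x - y) *v (s t x - s t y)) * (1 + norm x + norm (s t x))))
      \<and> continuous_on {0..} (\<lambda>\<tau>. \<integral>x. s \<tau> x \<bullet> vel \<gamma> (s \<tau>) (u \<tau>) x \<partial>u \<tau>)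
      \<longrightarrow> (\<forall>t\<ge>0. measure (u t) (space (u t)) = measure (u 0) (space (u 0))
             \<and> (\<integral>x. x \<partial>u t) = (\<integral>x. x \<partial>u 0)
             \<and> (\<integral>x. (norm x)^2 \<partial>u t) = (\<integral>x. (norm x)^2 \<partial>u 0)
             \<and> (\<exists>D. ((\<lambda>t. integral {0..t} (\<lambda>\<tau>. \<integral>x. s \<tau> x \<bullet> vel \<gamma> (s \<tau>) (u \<tau>) x \<partial>u \<tau>))
                      has_real_derivative D) (at t within {0..}) \<and> D \<le> 0))"
  proof (intro allI, rule impI)
    fix s :: "real \<Rightarrow> real^'n \<Rightarrow> real^'n" and u :: "real \<Rightarrow> (real^'n) measure"
    assume H: "weak_continuity_solution u (\<lambda>t. vel \<gamma> (s t) (u t))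
      \<and> (\<forall>t\<ge>0. s t \<in> borel_measurable borel)
      \<and> (\<forall>t\<ge>0. integrable (u t) (\<lambda>x. (norm x)^2))
      \<and> (\<forall>t\<ge>0. integrable (u t \<Otimes>\<^sub>M u t)
            (\<lambda>(x, y). norm (kerA \<gamma> (x - y) *v (s t x - s t y)) * (1 + norm x + norm (s t x))))
      \<and> continuous_on {0..} (\<lambda>\<tau>. \<integral>x. s \<tau> x \<bullet> vel \<gamma> (s \<tau>) (u \<tau>) x \<partial>u \<tau>)"
    have prob: "\<And>t. t \<ge> 0 \<Longrightarrow> prob_space (u t)" and sets: "\<And>t. t \<ge> 0 \<Longrightarrow> sets (u t) = sets borel"
      using H unfolding weak_continuity_solution_def by auto
    have der: "\<And>\<phi> g t. test_fn \<phi> g \<Longrightarrow> t \<ge> 0 \<Longrightarrow>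
        ((\<lambda>\<tau>. \<integral>x. \<phi> x \<partial>u \<tau>) has_real_derivative (\<integral>x. g x \<bullet> vel \<gamma> (s t) (u t) x \<partial>u t)) (at t within {0..})"
      using H unfolding weak_continuity_solution_def by blast
    have sm: "\<And>t. t \<ge> 0 \<Longrightarrow> s t \<in> borel_measurable borel" using H by blast
    have I2: "\<And>t. t \<ge> 0 \<Longrightarrow> integrable (u t) (\<lambda>x. (norm x)^2)" using H by blast
    have IB: "\<And>t. t \<ge> 0 \<Longrightarrow> integrable (u t \<Otimes>\<^sub>M u t)
            (\<lambda>(x, y). norm (kerA \<gamma> (x - y) *v (s t x - s t y)) * (1 + norm x + norm (s t x)))" using H by blast
    have cont: "continuous_on {0..} (\<lambda>\<tau>. \<integral>x. s \<tau> x \<bullet> vel \<gamma> (s \<tau>) (u \<tau>) x \<partial>u \<tau>)" using H by blast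
    have pat: "(\<integral>x. w x \<bullet> vel \<gamma> (s t) (u t) x \<partial>u t) = -(1/2) * (\<integral>(x,y). (w x - w y) \<bullet> (kerA \<gamma> (x - y) *v (s t x - s t y)) \<partial>(u t \<Otimes>\<^sub>M u t))"
      if "t \<ge> 0" "w \<in> borel_measurable borel" "C \<ge> 0" "\<And>x. norm (w x) \<le> C * (1 + norm x + norm (s t x))"
      for t w C
      by (rule part1_at[OF prob[OF that(1)] sets[OF that(1)] sm[OF that(1)] IB[OF that(1)] that(2,3,4)])
    have Z1: "(\<integral>x. c \<bullet> vel \<gamma> (s t) (u t) x \<partial>u t) = 0" if "t \<ge> 0" for t c
    proof -
      have "(\<integral>x. (\<lambda>_. c) x \<bullet> vel \<gamma> (s t) (u t) x \<partial>u t) = -(1/2) * (\<integral>(x,y). ((\<lambda>_. c) x - (\<lambda>_. c) y) \<bullet> (kerA \<gamma> (x - y) *v (s t x - s t y)) \<partial>(u t \<Otimes>\<^sub>M u t))"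
      proof (rule pat[OF that _ norm_ge_zero])
        show "(\<lambda>_. c) \<in> borel_measurable borel" by simp
        fix x
        have "norm c * 1 \<le> norm c * (1 + norm x + norm (s t x))"
          by (rule mult_left_mono) auto
        thus "norm c \<le> norm c * (1 + norm x + norm (s t x))" by simp
      qed
      thus ?thesis by (simp add: case_prod_unfold)
    qed
    have Z2: "(\<integral>x. (2 *\<^sub>R x) \<bullet> vel \<gamma> (s t) (u t) x \<partial>u t) = 0" if "t \<ge> 0" for t
    proof -
      have "(\<integral>x. (\<lambda>x. 2 *\<^sub>R x) x \<bullet> vel \<gamma> (s t) (u t) x \<partial>u t) = -(1/2) * (\<integral>(x,y). ((\<lambda>x. 2 *\<^sub>R x) x - (\<lambda>x. 2 *\<^sub>R x) y) \<bullet> (kerA \<gamma> (x - y) *v (s t x - s t y)) \<partial>(u t \<Otimes>\<^sub>M u t))"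
      proof (rule pat[OF that, where C=2])
        show "(\<lambda>x::real^'n. 2 *\<^sub>R x) \<in> borel_measurable borel" by measurable
        fix x :: "real^'n"
        show "norm (2 *\<^sub>R x) \<le> 2 * (1 + norm x + norm (s t x))" by simp
      qed simp
      moreover have "(\<lambda>(x,y). ((\<lambda>x. 2 *\<^sub>R x) x - (\<lambda>x. 2 *\<^sub>R x) y) \<bullet> (kerA \<gamma> (x - y) *v (s t x - s t y))) = (\<lambda>_. 0)"
      proof -
        have "(2 *\<^sub>R x - 2 *\<^sub>R y) \<bullet> (kerA \<gamma> (x - y) *v (s t x - s t y)) = 0" for x y :: "real^'n"
        proof -
          have "(2 *\<^sub>R x - 2 *\<^sub>R y) = 2 *\<^sub>R (x - y)" by (simp add: scaleR_diff_right)
          thus ?thesis by (simp only: inner_scaleR_left kerA_orth mult_zero_right)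
        qed
        thus ?thesis by (auto simp: fun_eq_iff)
      qed
      ultimately show ?thesis by simp
    qed
    have Z3: "(\<integral>x. s t x \<bullet> vel \<gamma> (s t) (u t) x \<partial>u t) \<le> 0" if "t \<ge> 0" for t
    proof -
      have "(\<integral>x. s t x \<bullet> vel \<gamma> (s t) (u t) x \<partial>u t) = -(1/2) * (\<integral>(x,y). (s t x - s t y) \<bullet> (kerA \<gamma> (x - y) *v (s t x - s t y)) \<partial>(u t \<Otimes>\<^sub>M u t))"
      proof (rule pat[OF that sm[OF that], where C=1])
        fix x :: "real^'n"
        show "norm (s t x) \<le> 1 * (1 + norm x + norm (s t x))" by simp
      qed simp
      moreover have "0 \<le> (\<integral>(x,y). (s t x - s t y) \<bullet> (kerA \<gamma> (x - y) *v (s t x - s t y)) \<partial>(u t \<Otimes>\<^sub>M u t))"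
        by (rule Bochner_Integration.integral_nonneg) (auto simp: kerA_psd split: prod.split)
      ultimately show ?thesis by simp
    qed
    have intid: "integrable (u t) (\<lambda>x. x)" if "t \<ge> 0" for t
    proof -
      interpret prob_space "u t" by (rule prob[OF that])
      have m: "(\<lambda>x::real^'n. x) \<in> borel_measurable (u t)"
        by (subst measurable_cong_sets[OF sets[OF that] refl]) simp
      show ?thesis
      proof (rule Bochner_Integration.integrable_bound[OF Bochner_Integration.integrable_add[OF integrable_const I2[OF that]] m], rule AE_I2)
        fix x :: "real^'n"
        have "norm x \<le> 1 + (norm x)^2" by (rule le_one_plus_sq)
        thus "norm x \<le> norm (1 + (norm x)^2)" by simp
      qed
    qed
    show "\<forall>t\<ge>0. measure (u t) (space (u t)) = measure (u 0) (space (u 0))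
             \<and> (\<integral>x. x \<partial>u t) = (\<integral>x. x \<partial>u 0)
             \<and> (\<integral>x. (norm x)^2 \<partial>u t) = (\<integral>x. (norm x)^2 \<partial>u 0)
             \<and> (\<exists>D. ((\<lambda>t. integral {0..t} (\<lambda>\<tau>. \<integral>x. s \<tau> x \<bullet> vel \<gamma> (s \<tau>) (u \<tau>) x \<partial>u \<tau>))
                      has_real_derivative D) (at t within {0..}) \<and> D \<le> 0)"
    proof (intro allI impI conjI)
      fix t :: real assume t: "t \<ge> 0"
      show "measure (u t) (space (u t)) = measure (u 0) (space (u 0))"
        using prob_space.prob_space[OF prob[OF t]] prob_space.prob_space[OF prob[of 0]] by simp
      have comp: "(\<integral>x. x $ k \<partial>u t) = (\<integral>x. x $ k \<partial>u 0)" for k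
      proof (rule const_on_nonneg[where f="\<lambda>\<tau>. \<integral>x. x $ k \<partial>u \<tau>", OF _ t])
        fix \<tau> :: real assume "\<tau> \<ge> 0"
        thus "((\<lambda>\<tau>. \<integral>x. x $ k \<partial>u \<tau>) has_real_derivative 0) (at \<tau> within {0..})"
          using der[OF test_comp, of \<tau> k] Z1[of \<tau> "axis k 1"] by simp
      qed
      have vc: "(\<integral>x. x \<partial>u \<tau>) $ k = (\<integral>x. x $ k \<partial>u \<tau>)" if "\<tau> \<ge> 0" for \<tau> k
      proof -
        have "(\<integral>x. x \<partial>u \<tau>) $ k = (\<integral>x. x \<partial>u \<tau>) \<bullet> axis k 1" by (rule cart_eq_inner_axis)
        also have "\<dots> = (\<integral>x. x \<bullet> axis k 1 \<partial>u \<tau>)"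
          by (rule integral_inner_left[symmetric]) (use intid[OF that] in auto)
        also have "\<dots> = (\<integral>x. x $ k \<partial>u \<tau>)" by (simp add: cart_eq_inner_axis[symmetric])
        finally show ?thesis .
      qed
      show "(\<integral>x. x \<partial>u t) = (\<integral>x. x \<partial>u 0)"
        by (simp add: vec_eq_iff vc[OF t] vc[of 0] comp)
      show "(\<integral>x. (norm x)^2 \<partial>u t) = (\<integral>x. (norm x)^2 \<partial>u 0)"
      proof (rule const_on_nonneg[where f="\<lambda>\<tau>. \<integral>x. (norm x)^2 \<partial>u \<tau>", OF _ t])
        fix \<tau> :: real assume "\<tau> \<ge> 0"
        thus "((\<lambda>\<tau>. \<integral>x. (norm x)^2 \<partial>u \<tau>) has_real_derivative 0) (at \<tau> within {0..})"
          using der[OF test_sq, of \<tau>] Z2[of \<tau>] by simp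
      qed
      show "\<exists>D. ((\<lambda>t. integral {0..t} (\<lambda>\<tau>. \<integral>x. s \<tau> x \<bullet> vel \<gamma> (s \<tau>) (u \<tau>) x \<partial>u \<tau>))
                      has_real_derivative D) (at t within {0..}) \<and> D \<le> 0"
        using ftc0[OF cont t] Z3[OF t] by blast
    qed
  qed
next
  show "\<forall>(s :: real \<Rightarrow> real^'n \<Rightarrow> real^'n) (X :: real \<Rightarrow> nat \<Rightarrow> real^'n) (n :: nat).
      n \<ge> 1
      \<and> (\<forall>i<n. \<forall>t\<ge>0. ((\<lambda>\<tau>. X \<tau> i) has_vector_derivative vel_particles \<gamma> (s t) n (X t) i) (at t within {0..}))
      \<and> continuous_on {0..} (\<lambda>\<tau>. \<Sum>i<n. s \<tau> (X \<tau> i) \<bullet> vel_particles \<gamma> (s \<tau>) n (X \<tau>) i)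
      \<longrightarrow> (\<forall>t\<ge>0. (1 / real n) *\<^sub>R (\<Sum>i<n. X t i) = (1 / real n) *\<^sub>R (\<Sum>i<n. X 0 i)
             \<and> (1 / real n) * (\<Sum>i<n. (norm (X t i))^2) = (1 / real n) * (\<Sum>i<n. (norm (X 0 i))^2)
             \<and> (\<exists>D. ((\<lambda>t. (1 / real n) * integral {0..t}
                        (\<lambda>\<tau>. \<Sum>i<n. s \<tau> (X \<tau> i) \<bullet> vel_particles \<gamma> (s \<tau>) n (X \<tau>) i))
                      has_real_derivative D) (at t within {0..}) \<and> D \<le> 0))"
  proof (intro allI, rule impI)
    fix s :: "real \<Rightarrow> real^'n \<Rightarrow> real^'n" and X :: "real \<Rightarrow> nat \<Rightarrow> real^'n" and n :: nat
    assume H: "n \<ge> 1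
      \<and> (\<forall>i<n. \<forall>t\<ge>0. ((\<lambda>\<tau>. X \<tau> i) has_vector_derivative vel_particles \<gamma> (s t) n (X t) i) (at t within {0..}))
      \<and> continuous_on {0..} (\<lambda>\<tau>. \<Sum>i<n. s \<tau> (X \<tau> i) \<bullet> vel_particles \<gamma> (s \<tau>) n (X \<tau>) i)"
    have D: "\<And>i t. i < n \<Longrightarrow> t \<ge> 0 \<Longrightarrow> ((\<lambda>\<tau>. X \<tau> i) has_vector_derivative vel_particles \<gamma> (s t) n (X t) i) (at t within {0..})"
      using H by blast
    have cont: "continuous_on {0..} (\<lambda>\<tau>. \<Sum>i<n. s \<tau> (X \<tau> i) \<bullet> vel_particles \<gamma> (s \<tau>) n (X \<tau>) i)"
      using H by blast
    show "\<forall>t\<ge>0. (1 / real n) *\<^sub>R (\<Sum>i<n. X t i) = (1 / real n) *\<^sub>R (\<Sum>i<n. X 0 i)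
             \<and> (1 / real n) * (\<Sum>i<n. (norm (X t i))^2) = (1 / real n) * (\<Sum>i<n. (norm (X 0 i))^2)
             \<and> (\<exists>D. ((\<lambda>t. (1 / real n) * integral {0..t}
                        (\<lambda>\<tau>. \<Sum>i<n. s \<tau> (X \<tau> i) \<bullet> vel_particles \<gamma> (s \<tau>) n (X \<tau>) i))
                      has_real_derivative D) (at t within {0..}) \<and> D \<le> 0)"
    proof (intro allI impI conjI)
      fix t :: real assume t: "t \<ge> 0"
      have dsum: "((\<lambda>\<tau>. \<Sum>i<n. X \<tau> i) has_vector_derivative 0) (at \<tau> within {0..})" if "\<tau> \<in> {0..}" for \<tau>
      proof -
        have "((\<lambda>\<tau>. \<Sum>i<n. X \<tau> i) has_vector_derivative (\<Sum>i<n. vel_particles \<gamma> (s \<tau>) n (X \<tau>) i)) (at \<tau> within {0..})"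
          by (rule has_vector_derivative_sum) (use D that in auto)
        thus ?thesis by (simp add: vp_sum)
      qed
      obtain c where "\<And>\<tau>. \<tau> \<in> {0::real..} \<Longrightarrow> (\<Sum>i<n. X \<tau> i) = c"
        using has_vector_derivative_zero_constant[of "{0::real..}" "\<lambda>\<tau>. \<Sum>i<n. X \<tau> i"] dsum by blast
      hence "(\<Sum>i<n. X t i) = (\<Sum>i<n. X 0 i)" using t by auto
      thus "(1 / real n) *\<^sub>R (\<Sum>i<n. X t i) = (1 / real n) *\<^sub>R (\<Sum>i<n. X 0 i)" by simp
      have "(\<Sum>i<n. (norm (X t i))^2) = (\<Sum>i<n. (norm (X 0 i))^2)"
      proof (rule const_on_nonneg[where f="\<lambda>\<tau>. \<Sum>i<n. (norm (X \<tau> i))^2", OF _ t])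
        fix \<tau> :: real assume \<tau>: "\<tau> \<ge> 0"
        have "((\<lambda>\<tau>. \<Sum>i<n. (norm (X \<tau> i))^2) has_real_derivative (\<Sum>i<n. 2 * (X \<tau> i \<bullet> vel_particles \<gamma> (s \<tau>) n (X \<tau>) i))) (at \<tau> within {0..})"
          by (rule DERIV_sum, rule sq_deriv_vec, rule D) (use \<tau> in auto)
        moreover have "(\<Sum>i<n. 2 * (X \<tau> i \<bullet> vel_particles \<gamma> (s \<tau>) n (X \<tau>) i)) = 0"
          by (simp add: sum_distrib_left[symmetric] vp_energy)
        ultimately show "((\<lambda>\<tau>. \<Sum>i<n. (norm (X \<tau> i))^2) has_real_derivative 0) (at \<tau> within {0..})"
          by simp
      qed
      thus "(1 / real n) * (\<Sum>i<n. (norm (X t i))^2) = (1 / real n) * (\<Sum>i<n. (norm (X 0 i))^2)" by simp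
      have "((\<lambda>t. (1 / real n) * integral {0..t}
                        (\<lambda>\<tau>. \<Sum>i<n. s \<tau> (X \<tau> i) \<bullet> vel_particles \<gamma> (s \<tau>) n (X \<tau>) i))
                      has_real_derivative ((1 / real n) * (\<Sum>i<n. s t (X t i) \<bullet> vel_particles \<gamma> (s t) n (X t) i))) (at t within {0..})"
        by (rule DERIV_cmult, rule ftc0[OF cont t])
      moreover have "(1 / real n) * (\<Sum>i<n. s t (X t i) \<bullet> vel_particles \<gamma> (s t) n (X t) i) \<le> 0"
        by (rule mult_nonneg_nonpos) (simp_all add: vp_entropy)
      ultimately show "\<exists>D. ((\<lambda>t. (1 / real n) * integral {0..t}
                        (\<lambda>\<tau>. \<Sum>i<n. s \<tau> (X \<tau> i) \<bullet> vel_particles \<gamma> (s \<tau>) n (X \<tau>) i))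
                      has_real_derivative D) (at t within {0..}) \<and> D \<le> 0" by blast
    qed
  qed
next
  show "\<forall>(s :: real^'n \<Rightarrow> real^'n) (X :: nat \<Rightarrow> nat \<Rightarrow> real^'n) (n :: nat) (dt :: real).
      n \<ge> 1 \<and> dt > 0
      \<and> (\<forall>k. \<forall>i<n. X (Suc k) i = X k i + dt *\<^sub>R vel_particles \<gamma> s n (X k) i)
      \<longrightarrow> (\<forall>k. (1 / real n) *\<^sub>R (\<Sum>i<n. X (Suc k) i) = (1 / real n) *\<^sub>R (\<Sum>i<n. X k i)
             \<and> (dt / real n) * (\<Sum>j\<in>{1..Suc k}. \<Sum>i<n. s (X j i) \<bullet> vel_particles \<gamma> s n (X j) i)
               \<le> (dt / real n) * (\<Sum>j\<in>{1..k}. \<Sum>i<n. s (X j i) \<bullet> vel_particles \<gamma> s n (X j) i))"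
  proof (intro allI impI conjI)
    fix s :: "real^'n \<Rightarrow> real^'n" and X :: "nat \<Rightarrow> nat \<Rightarrow> real^'n" and n :: nat and dt :: real and k :: nat
    assume H: "n \<ge> 1 \<and> dt > 0
      \<and> (\<forall>k. \<forall>i<n. X (Suc k) i = X k i + dt *\<^sub>R vel_particles \<gamma> s n (X k) i)"
    have dt: "dt > 0" using H by blast
    have R: "\<And>i. i < n \<Longrightarrow> X (Suc k) i = X k i + dt *\<^sub>R vel_particles \<gamma> s n (X k) i" using H by blast
    have "(\<Sum>i<n. X (Suc k) i) = (\<Sum>i<n. X k i + dt *\<^sub>R vel_particles \<gamma> s n (X k) i)"
      by (rule sum.cong) (auto simp: R)
    also have "\<dots> = (\<Sum>i<n. X k i) + dt *\<^sub>R (\<Sum>i<n. vel_particles \<gamma> s n (X k) i)"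
      by (simp add: sum.distrib scaleR_sum_right)
    also have "\<dots> = (\<Sum>i<n. X k i)" by (simp add: vp_sum)
    finally show "(1 / real n) *\<^sub>R (\<Sum>i<n. X (Suc k) i) = (1 / real n) *\<^sub>R (\<Sum>i<n. X k i)" by simp
    have T: "(\<Sum>i<n. s (X (Suc k) i) \<bullet> vel_particles \<gamma> s n (X (Suc k)) i) \<le> 0" by (rule vp_entropy)
    have E: "(\<Sum>j\<in>{1..Suc k}. \<Sum>i<n. s (X j i) \<bullet> vel_particles \<gamma> s n (X j) i)
        = (\<Sum>j\<in>{1..k}. \<Sum>i<n. s (X j i) \<bullet> vel_particles \<gamma> s n (X j) i) + (\<Sum>i<n. s (X (Suc k) i) \<bullet> vel_particles \<gamma> s n (X (Suc k)) i)"
      by (simp add: sum.cl_ivl_Suc)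
    have N: "dt / real n \<ge> 0" using dt by simp
    have P: "(dt / real n) * (\<Sum>i<n. s (X (Suc k) i) \<bullet> vel_particles \<gamma> s n (X (Suc k)) i) \<le> 0"
      by (rule mult_nonneg_nonpos[OF N T])
    show "(dt / real n) * (\<Sum>j\<in>{1..Suc k}. \<Sum>i<n. s (X j i) \<bullet> vel_particles \<gamma> s n (X j) i)
               \<le> (dt / real n) * (\<Sum>j\<in>{1..k}. \<Sum>i<n. s (X j i) \<bullet> vel_particles \<gamma> s n (X j) i)"
      unfolding E distrib_left using P by linarith
  qed
qed

end
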